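(* Let $n,s,k$ be positive integers with $n\ge(s+1)k$. Suppose that for any cross-dependent families $\mathcal G_1,\ldots,\mathcal G_{s+1}\subset\binom{[n]}{k}$ we have $\min_i|\mathcal G_i|\le\binom{n}{k}-\binom{n-s}{k}$. Then for any cross-dependent families $\mathcal F_1,\ldots,\mathcal F_{s+1}\subset\binom{[n+1]}{k}$ we have $\min_i|\mathcal F_i|\le\binom{n+1}{k}-\binom{n+1-s}{k}$.
   Context: $[n]=\{1,\ldots,n\}$ and $\binom{X}{k}$ denotes the family of all $k$-element subsets of $X$. Families $\mathcal F_1,\ldots,\mathcal F_{s+1}$ are called cross-dependent if there are no pairwise disjoint sets $F_1,\ldots,F_{s+1}$ with $F_i\in\mathcal F_i$ for every $i$. *)

theory Defs
  imports Main
begin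

definition cross_dependent :: "nat \<Rightarrow> (nat \<Rightarrow> 'a set set) \<Rightarrow> bool" where
  "cross_dependent s F \<longleftrightarrow>
     \<not> (\<exists>A :: nat \<Rightarrow> 'a set.
          (\<forall>i\<le>s. A i \<in> F i) \<and>
          (\<forall>i\<le>s. \<forall>j\<le>s. i \<noteq> j \<longrightarrow> A i \<inter> A j = {}))"

definition ksubsets :: "'a set \<Rightarrow> nat \<Rightarrow> 'a set set" where
  "ksubsets X k = {A. A \<subseteq> X \<and> card A = k}"

end

theory Submission
  imports Defs
begin


definition sh :: "'a \<Rightarrow> 'a \<Rightarrow> 'a set \<Rightarrow> 'a set" where
  "sh x e A = (if x \<in> A \<and> e \<notin> A then insert e (A - {x}) else A)"

definition Sh :: "'a \<Rightarrow> 'a \<Rightarrow> 'a set set \<Rightarrow> 'a set set" where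
  "Sh x e F = {A \<in> F. sh x e A \<in> F} \<union> (sh x e ` {A \<in> F. sh x e A \<notin> F})"

definition shadow :: "'a set set \<Rightarrow> 'a set set" where
  "shadow X = {A - {y} | A y. A \<in> X \<and> y \<in> A}"

lemma moved_props: "A \<in> F \<Longrightarrow> sh x e A \<notin> F \<Longrightarrow> x \<in> A \<and> e \<notin> A"
  unfolding sh_def by (auto split: if_splits)

lemma Sh_card:
  assumes "finite F" "x \<noteq> e"
  shows "card (Sh x e F) = card F"
proof -
  let ?K = "{A \<in> F. sh x e A \<in> F}"
  let ?M = "{A \<in> F. sh x e A \<notin> F}"
  have inj: "inj_on (sh x e) ?M"
  proof (rule inj_onI)
    fix A B assume A: "A \<in> ?M" and B: "B \<in> ?M" and eq: "sh x e A = sh x e B"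
    have a: "x \<in> A \<and> e \<notin> A" using A moved_props[of A F x e] by simp
    have b: "x \<in> B \<and> e \<notin> B" using B moved_props[of B F x e] by simp
    have i: "insert e (A - {x}) = insert e (B - {x})" using eq a b by (simp add: sh_def)
    have "A = insert x (insert e (A - {x}) - {e})" using a assms(2) by auto
    also have "\<dots> = insert x (insert e (B - {x}) - {e})" by (simp only: i)
    also have "\<dots> = B" using b assms(2) by auto
    finally show "A = B" .
  qed
  have disj: "?K \<inter> sh x e ` ?M = {}" by auto
  have "card (Sh x e F) = card ?K + card (sh x e ` ?M)"
    unfolding Sh_def using assms(1) disj by (intro card_Un_disjoint) auto
  also have "\<dots> = card ?K + card ?M" using card_image[OF inj] by simp
  also have "\<dots> = card (?K \<union> ?M)" using assms(1) by (intro card_Un_disjoint[symmetric]) auto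
  also have "?K \<union> ?M = F" by auto
  finally show ?thesis .
qed

lemma Sh_mem: "B \<in> Sh x e G \<longleftrightarrow> (B \<in> G \<and> sh x e B \<in> G) \<or> (\<exists>A\<in>G. B = sh x e A \<and> B \<notin> G)"
  unfolding Sh_def by auto

lemma Sh_ksubsets:
  assumes "F \<subseteq> ksubsets V k" "e \<in> V" "finite V"
  shows "Sh x e F \<subseteq> ksubsets V k"
proof
  fix B assume "B \<in> Sh x e F"
  then consider "B \<in> F" | A where "A \<in> F" "B = sh x e A" unfolding Sh_def by auto
  then show "B \<in> ksubsets V k"
  proof cases
    case 1 then show ?thesis using assms by auto
  next
    case 2
    have A: "A \<subseteq> V" "card A = k" using 2 assms unfolding ksubsets_def by auto
    have fA: "finite A" using A assms finite_subset by blast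
    show ?thesis
    proof (cases "x \<in> A \<and> e \<notin> A")
      case True
      then have "B = insert e (A - {x})" using 2 unfolding sh_def by simp
      moreover have "card A > 0" using True fA by (auto simp: card_gt_0_iff)
      moreover have "card (insert e (A - {x})) = k" using True fA A calculation(2) by (simp add: card.insert_remove)
      ultimately show ?thesis using A assms True unfolding ksubsets_def by auto
    next
      case False
      then have "sh x e A = A" unfolding sh_def by auto
      then have "B = A" using 2(2) by simp
      then show ?thesis using 2 assms by auto
    qed
  qed
qed

lemma Sh_measure_e:
  assumes "finite F" "A \<in> F" "sh x e A \<notin> F" "x \<noteq> e"
  shows "card {B \<in> Sh x e F. e \<notin> B} < card {B \<in> F. e \<notin> B}"
proof (rule psubset_card_mono)
  show "finite {B \<in> F. e \<notin> B}" using assms by simp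
  have a: "x \<in> A \<and> e \<notin> A" using moved_props[OF assms(2,3)] .
  have sub: "{B \<in> Sh x e F. e \<notin> B} \<subseteq> {B \<in> F. e \<notin> B}"
    unfolding Sh_def sh_def by auto
  have "A \<notin> Sh x e F" using assms a unfolding Sh_def sh_def by auto
  then show "{B \<in> Sh x e F. e \<notin> B} \<subset> {B \<in> F. e \<notin> B}" using sub a assms by blast
qed

lemma Sh_measure_x:
  assumes "finite F" "A \<in> F" "sh x e A \<notin> F" "x \<noteq> e"
  shows "card {B \<in> Sh x e F. x \<in> B} < card {B \<in> F. x \<in> B}"
proof (rule psubset_card_mono)
  show "finite {B \<in> F. x \<in> B}" using assms by simp
  have a: "x \<in> A \<and> e \<notin> A" using moved_props[OF assms(2,3)] .
  have sub: "{B \<in> Sh x e F. x \<in> B} \<subseteq> {B \<in> F. x \<in> B}"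
    unfolding Sh_def sh_def using assms(4) by auto
  have "A \<notin> Sh x e F" using assms a unfolding Sh_def sh_def by auto
  then show "{B \<in> Sh x e F. x \<in> B} \<subset> {B \<in> F. x \<in> B}" using sub a assms by blast
qed

lemma shadowI: "A \<in> X \<Longrightarrow> y \<in> A \<Longrightarrow> B = A - {y} \<Longrightarrow> B \<in> shadow X"
  unfolding shadow_def by blast

lemma Sh_memI1: "B \<in> G \<Longrightarrow> sh x e B \<in> G \<Longrightarrow> B \<in> Sh x e G"
  unfolding Sh_def by blast

lemma Sh_memI2: "A \<in> G \<Longrightarrow> B = sh x e A \<Longrightarrow> B \<notin> G \<Longrightarrow> B \<in> Sh x e G"
  unfolding Sh_def by blast

lemma sh_id: "\<not> (x \<in> B \<and> e \<notin> B) \<Longrightarrow> sh x e B = B"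
  unfolding sh_def by auto

lemma sh_mv: "x \<in> B \<Longrightarrow> e \<notin> B \<Longrightarrow> sh x e B = insert e (B - {x})"
  unfolding sh_def by simp

lemma Sh_shadow:
  assumes "x \<noteq> e"
  shows "shadow (Sh x e F) \<subseteq> Sh x e (shadow F)"
proof
  fix B assume "B \<in> shadow (Sh x e F)"
  then obtain C y where C: "C \<in> Sh x e F" "y \<in> C" "B = C - {y}" unfolding shadow_def by blast
  from C(1) consider "C \<in> F" "sh x e C \<in> F" | A where "A \<in> F" "C = sh x e A" "C \<notin> F"
    unfolding Sh_def by blast
  then show "B \<in> Sh x e (shadow F)"
  proof cases
    case 1
    have Bs: "B \<in> shadow F" using 1 C by (intro shadowI) 
    show ?thesis
    proof (cases "x \<in> B \<and> e \<notin> B")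
      case True
      show ?thesis
      proof (cases "y = e")
        case True2: True
        have "x \<in> C" using True C by blast
        have "sh x e C = C" using True2 C(2) by (intro sh_id) blast
        have "sh x e B = insert e (B - {x})" using True by (intro sh_mv) auto
        also have "\<dots> = C - {x}" using C True2 assms by auto
        finally have "sh x e B = C - {x}" .
        then have "sh x e B \<in> shadow F" using 1 \<open>x \<in> C\<close> by (intro shadowI) 
        then show ?thesis by (rule Sh_memI1[OF Bs])
      next
        case False
        have "e \<notin> C" using True False C by blast
        have "x \<in> C" using True C by blast
        have sC: "sh x e C = insert e (C - {x})" using \<open>x \<in> C\<close> \<open>e \<notin> C\<close> by (rule sh_mv)
        have sB: "sh x e B = insert e (B - {x})" using True by (intro sh_mv) auto
        have "sh x e B = sh x e C - {y}" unfolding sB sC using C(3) False True C(2) assms by auto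
        moreover have "y \<in> sh x e C" using C True False sC by blast
        ultimately have "sh x e B \<in> shadow F" using 1 by (intro shadowI) 
        then show ?thesis by (rule Sh_memI1[OF Bs])
      qed
    next
      case False
      then have "sh x e B = B" by (rule sh_id)
      then show ?thesis using Bs by (intro Sh_memI1) simp_all
    qed
  next
    case 2
    have "sh x e A \<notin> F" using 2 by simp
    then have a: "x \<in> A" "e \<notin> A" using moved_props[OF 2(1)] by simp_all
    have Ceq: "C = insert e (A - {x})" unfolding 2(2) using a by (rule sh_mv)
    show ?thesis
    proof (cases "y = e")
      case True
      have "B = A - {x}" using Ceq True C a by auto
      then have "B \<in> shadow F" using 2 a by (intro shadowI)
      moreover have "sh x e B = B" using \<open>B = A - {x}\<close> by (intro sh_id) blast
      ultimately show ?thesis by (intro Sh_memI1) simp_all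
    next
      case False
      have eB: "e \<in> B" "x \<notin> B" using Ceq False C assms by auto
      show ?thesis
      proof (cases "B \<in> shadow F")
        case True
        moreover have "sh x e B = B" using eB by (intro sh_id) blast
        ultimately show ?thesis by (intro Sh_memI1) simp_all
      next
        case False
        have yA: "y \<in> A" using C Ceq \<open>y \<noteq> e\<close> assms by auto
        have "A - {y} \<in> shadow F" by (rule shadowI[OF 2(1) yA refl])
        moreover have "sh x e (A - {y}) = insert e (A - {y} - {x})" using a yA C Ceq \<open>y \<noteq> e\<close>
          by (intro sh_mv) auto
        moreover have "B = insert e (A - {y} - {x})" using Ceq C \<open>y \<noteq> e\<close> by auto
        ultimately have "B = sh x e (A - {y})" by simp
        then show ?thesis using Sh_memI2[OF \<open>A - {y} \<in> shadow F\<close> _ False] by blast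
      qed
    qed
  qed
qed

lemma Sh_cross:
  assumes "x \<noteq> e" "cross_dependent s F"
  shows "cross_dependent s (\<lambda>i. Sh x e (F i))"
  unfolding cross_dependent_def
proof
  assume "\<exists>B. (\<forall>i\<le>s. B i \<in> Sh x e (F i)) \<and> (\<forall>i\<le>s. \<forall>j\<le>s. i \<noteq> j \<longrightarrow> B i \<inter> B j = {})"
  then obtain B where BD: "(\<forall>i\<le>s. B i \<in> Sh x e (F i)) \<and> (\<forall>i\<le>s. \<forall>j\<le>s. i \<noteq> j \<longrightarrow> B i \<inter> B j = {})"
    by (elim exE)
  have B: "B i \<in> Sh x e (F i)" if "i \<le> s" for i using BD that by simp
  have D: "B i \<inter> B j = {}" if "i \<le> s" "j \<le> s" "i \<noteq> j" for i j using BD that by simp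
  have nd: "\<not> (\<exists>C :: nat \<Rightarrow> _. (\<forall>i\<le>s. C i \<in> F i) \<and> (\<forall>i\<le>s. \<forall>j\<le>s. i \<noteq> j \<longrightarrow> C i \<inter> C j = {}))"
    using assms(2) unfolding cross_dependent_def .
  have nodisj: "\<not> ((\<forall>i\<le>s. C i \<in> F i) \<and> (\<forall>i\<le>s. \<forall>j\<le>s. i \<noteq> j \<longrightarrow> C i \<inter> C j = {}))" for C
  proof
    assume "(\<forall>i\<le>s. C i \<in> F i) \<and> (\<forall>i\<le>s. \<forall>j\<le>s. i \<noteq> j \<longrightarrow> C i \<inter> C j = {})"
    then have "\<exists>C :: nat \<Rightarrow> _. (\<forall>i\<le>s. C i \<in> F i) \<and> (\<forall>i\<le>s. \<forall>j\<le>s. i \<noteq> j \<longrightarrow> C i \<inter> C j = {})"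
      by (rule exI[where x=C])
    then show False using nd by contradiction
  qed
  show False
  proof (cases "\<forall>i\<le>s. B i \<in> F i")
    case True
    then show False using nodisj[of B] BD by simp
  next
    case False
    then obtain i0 where i0: "i0 \<le> s" "B i0 \<notin> F i0" by auto
    have "B i0 \<in> Sh x e (F i0)" using B[OF i0(1)] .
    then obtain A where A: "A \<in> F i0" "B i0 = sh x e A" "sh x e A \<notin> F i0"
      using i0(2) unfolding Sh_def by auto
    have a: "x \<in> A \<and> e \<notin> A" using moved_props[OF A(1,3)] .
    have Bi0: "B i0 = insert e (A - {x})" using A a unfolding sh_def by simp
    have Aeq: "A = insert x (B i0 - {e})" using Bi0 a by auto
    have noe: "e \<notin> B j" if "j \<le> s" "j \<noteq> i0" for j
    proof
      assume "e \<in> B j"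
      moreover have "e \<in> B i0" using Bi0 by simp
      ultimately have "e \<in> B j \<inter> B i0" by simp
      then show False using D[OF that(1) i0(1) that(2)] by simp
    qed
    have inF: "B j \<in> F j" if "j \<le> s" "j \<noteq> i0" for j
    proof (rule ccontr)
      assume nF: "B j \<notin> F j"
      have "B j \<in> Sh x e (F j)" using B[OF that(1)] .
      then obtain A' where A': "A' \<in> F j" "B j = sh x e A'" "sh x e A' \<notin> F j"
        using nF unfolding Sh_def by auto
      have "x \<in> A' \<and> e \<notin> A'" using moved_props[OF A'(1,3)] .
      then have "e \<in> B j" using A'(2) unfolding sh_def by simp
      then show False using noe[OF that] by simp
    qed
    show False
    proof (cases "\<exists>j\<le>s. j \<noteq> i0 \<and> x \<in> B j")
      case True
      then obtain j where j: "j \<le> s" "j \<noteq> i0" "x \<in> B j" by auto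
      have ej: "e \<notin> B j" using noe[OF j(1,2)] .
      have "sh x e (B j) \<in> F j"
      proof -
        have "B j \<in> Sh x e (F j)" using B[OF j(1)] .
        then consider "B j \<in> F j \<and> sh x e (B j) \<in> F j" | A' where "A' \<in> F j" "B j = sh x e A'" "sh x e A' \<notin> F j"
          unfolding Sh_def by auto
        then show ?thesis
        proof cases
          case 1 then show ?thesis by simp
        next
          case 2
          then have "x \<in> A' \<and> e \<notin> A'" using moved_props[OF 2(1,3)] by simp
          then have "e \<in> B j" using 2(2) unfolding sh_def by simp
          then show ?thesis using ej by simp
        qed
      qed
      then have Fj: "insert e (B j - {x}) \<in> F j" using j ej unfolding sh_def by simp
      have nox: "x \<notin> B l" if "l \<le> s" "l \<noteq> j" for l
        using D[OF that(1) j(1) that(2)] j(3) by auto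
      define C where "C = B(i0 := insert x (B i0 - {e}), j := insert e (B j - {x}))"
      have "\<forall>i\<le>s. C i \<in> F i"
      proof (intro allI impI)
        fix i assume "i \<le> s"
        then show "C i \<in> F i"
          using inF[of i] Fj A(1) j(2) unfolding C_def Aeq[symmetric] by (cases "i = j"; cases "i = i0") simp_all
      qed
      moreover have "\<forall>i\<le>s. \<forall>l\<le>s. i \<noteq> l \<longrightarrow> C i \<inter> C l = {}"
      proof (intro allI impI)
        fix i l assume il: "i \<le> s" "l \<le> s" "i \<noteq> l"
        have xi0: "x \<notin> B i0" using nox[OF i0(1)] j(2) by auto
        have Dil: "B i \<inter> B l = {}" using D[OF il] .
        have Dij: "B i0 \<inter> B j = {}" using D[OF i0(1) j(1) j(2)[symmetric]] .
        have sub: "C m \<subseteq> B m \<union> {x, e}" for m unfolding C_def by auto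
        have Cother: "m \<noteq> i0 \<Longrightarrow> m \<noteq> j \<Longrightarrow> C m = B m" for m unfolding C_def by auto
        have Ci0: "C i0 = insert x (B i0 - {e})" unfolding C_def using j(2) by auto
        have Cj: "C j = insert e (B j - {x})" unfolding C_def by auto
        consider "i = i0" "l = j" | "i = j" "l = i0" | "i = i0" "l \<noteq> j" | "l = i0" "i \<noteq> j"
          | "i = j" "l \<noteq> i0" | "l = j" "i \<noteq> i0" | "i \<noteq> i0" "i \<noteq> j" "l \<noteq> i0" "l \<noteq> j"
          using il by metis
        then show "C i \<inter> C l = {}"
        proof cases
          case 1
          then have "C i = insert x (B i0 - {e})" "C l = insert e (B j - {x})" using Ci0 Cj by simp_all
          then show ?thesis using Dij xi0 ej assms(1) by auto
        next
          case 2
          then have "C l = insert x (B i0 - {e})" "C i = insert e (B j - {x})" using Ci0 Cj by simp_all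
          then show ?thesis using Dij xi0 ej assms(1) by auto
        next
          case 3 then show ?thesis using Cother[of l] Ci0 Dil nox[of l] noe[of l] il by auto
        next
          case 4 then show ?thesis using Cother[of i] Ci0 Dil nox[of i] noe[of i] il by auto
        next
          case 5 then show ?thesis using Cother[of l] Cj Dil noe[of l] il j by auto
        next
          case 6 then show ?thesis using Cother[of i] Cj Dil noe[of i] il j by auto
        next
          case 7 then show ?thesis using Cother[of i] Cother[of l] Dil by auto
        qed
      qed
      ultimately show False using nodisj[of C] by simp
    next
      case False
      define C where "C = B(i0 := insert x (B i0 - {e}))"
      have "\<forall>i\<le>s. C i \<in> F i"
      proof (intro allI impI)
        fix i assume "i \<le> s"
        then show "C i \<in> F i"
          using inF[of i] A(1) unfolding C_def Aeq[symmetric] by (cases "i = i0") simp_all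
      qed
      moreover have "\<forall>i\<le>s. \<forall>l\<le>s. i \<noteq> l \<longrightarrow> C i \<inter> C l = {}"
      proof (intro allI impI)
        fix i l assume il: "i \<le> s" "l \<le> s" "i \<noteq> l"
        have Dil: "B i \<inter> B l = {}" using D[OF il] .
        have Cother: "m \<noteq> i0 \<Longrightarrow> C m = B m" for m unfolding C_def by auto
        have Ci0: "C i0 = insert x (B i0 - {e})" unfolding C_def by auto
        consider "i = i0" | "l = i0" | "i \<noteq> i0" "l \<noteq> i0" by metis
        then show "C i \<inter> C l = {}"
        proof cases
          case 1 then show ?thesis using Ci0 Cother[of l] Dil False il by auto
        next
          case 2 then show ?thesis using Ci0 Cother[of i] Dil False il by auto
        next
          case 3 then show ?thesis using Cother[of i] Cother[of l] Dil by auto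
        qed
      qed
      ultimately show False using nodisj[of C] by simp
    qed
  qed
qed






lemma finite_Sh: "finite G \<Longrightarrow> finite (Sh x e G)"
  unfolding Sh_def by auto

lemma ksub_finite: "finite V \<Longrightarrow> Y \<subseteq> ksubsets V k \<Longrightarrow> finite Y"
  unfolding ksubsets_def by (rule finite_subset[of _ "Pow V"]) auto

lemma shadow_finite: "finite V \<Longrightarrow> Y \<subseteq> ksubsets V k \<Longrightarrow> finite (shadow Y)"
  unfolding ksubsets_def shadow_def by (rule finite_subset[of _ "Pow V"]) auto

lemma Sh_measure_x_le:
  assumes "finite F" "x \<noteq> e"
  shows "card {B \<in> Sh x e F. x \<in> B} \<le> card {B \<in> F. x \<in> B}"
proof (rule card_mono)
  show "finite {B \<in> F. x \<in> B}" using assms by simp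
  show "{B \<in> Sh x e F. x \<in> B} \<subseteq> {B \<in> F. x \<in> B}"
    unfolding Sh_def sh_def using assms(2) by auto
qed

lemma stab_e:
  assumes "finite V" "e \<in> V" "X \<subseteq> ksubsets V k"
  shows "\<exists>X'. X' \<subseteq> ksubsets V k \<and> card X' = card X \<and> card (shadow X') \<le> card (shadow X) \<and>
     (\<forall>A\<in>X'. \<forall>x\<in>A. e \<notin> A \<longrightarrow> insert e (A - {x}) \<in> X')"
proof -
  let ?P = "\<lambda>X'. X' \<subseteq> ksubsets V k \<and> card X' = card X \<and> card (shadow X') \<le> card (shadow X)"
  have "?P X" using assms by simp
  then obtain X' where X': "?P X'" and min: "\<And>Y. ?P Y \<Longrightarrow> card {A\<in>X'. e\<notin>A} \<le> card {A\<in>Y. e\<notin>A}"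
    using ex_has_least_nat[of ?P X "\<lambda>Y. card {A\<in>Y. e\<notin>A}"] by auto
  have fX': "finite X'" using X' by (intro ksub_finite[OF assms(1), of X' k]) simp
  have "\<forall>A\<in>X'. \<forall>x\<in>A. e \<notin> A \<longrightarrow> insert e (A - {x}) \<in> X'"
  proof (intro ballI impI, rule ccontr)
    fix A x assume A: "A \<in> X'" "x \<in> A" "e \<notin> A" and nin: "insert e (A - {x}) \<notin> X'"
    have xe: "x \<noteq> e" using A by auto
    have shA: "sh x e A \<notin> X'" using A nin unfolding sh_def by simp
    let ?Y = "Sh x e X'"
    have Yk: "?Y \<subseteq> ksubsets V k" using Sh_ksubsets[of X' V k e x] X' assms by simp
    have Yc: "card ?Y = card X" using Sh_card[OF fX' xe] X' by simp
    have fs: "finite (shadow X')" using X' by (intro shadow_finite[OF assms(1), of X' k]) simp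
    have "card (shadow ?Y) \<le> card (Sh x e (shadow X'))"
      using Sh_shadow[OF xe, of X'] finite_Sh[OF fs] by (rule card_mono[rotated])
    also have "\<dots> = card (shadow X')" using Sh_card[OF fs xe] .
    also have "\<dots> \<le> card (shadow X)" using X' by simp
    finally have "?P ?Y" using Yk Yc by simp
    then have "card {B\<in>X'. e\<notin>B} \<le> card {B\<in>?Y. e\<notin>B}" by (rule min)
    moreover have "card {B \<in> ?Y. e \<notin> B} < card {B \<in> X'. e \<notin> B}"
      using Sh_measure_e[OF fX' A(1) shA xe] .
    ultimately show False by simp
  qed
  then show ?thesis using X' by (intro exI[where x=X']) simp
qed

lemma cross_mono:
  assumes "cross_dependent s F" "\<forall>i\<le>s. G i \<subseteq> F i"
  shows "cross_dependent s G"
  using assms unfolding cross_dependent_def by blast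

lemma stab_main:
  assumes "finite V" "\<forall>i\<le>s. F i \<subseteq> ksubsets V k" "cross_dependent s F"
  shows "\<exists>G. (\<forall>i\<le>s. G i \<subseteq> ksubsets V k) \<and> cross_dependent s G \<and> (\<forall>i\<le>s. card (G i) = card (F i)) \<and>
     (\<forall>i\<le>s. \<forall>A\<in>G i. z \<in> A \<longrightarrow> (\<forall>y\<in>V. y \<notin> A \<longrightarrow> insert y (A - {z}) \<in> G i))"
proof -
  let ?P = "\<lambda>G. (\<forall>i\<le>s. G i \<subseteq> ksubsets V k) \<and> cross_dependent s G \<and> (\<forall>i\<le>s. card (G i) = card (F i))"
  let ?m = "\<lambda>G. \<Sum>i\<in>{..s}. card {A \<in> G i. z \<in> A}"
  have "?P F" using assms by simp
  then obtain G where G: "?P G" and min: "\<And>H. ?P H \<Longrightarrow> ?m G \<le> ?m H"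
    using ex_has_least_nat[of ?P F ?m] by auto
  have fG: "finite (G i)" if "i \<le> s" for i using G that by (intro ksub_finite[OF assms(1), of "G i" k]) simp
  have "\<forall>i\<le>s. \<forall>A\<in>G i. z \<in> A \<longrightarrow> (\<forall>y\<in>V. y \<notin> A \<longrightarrow> insert y (A - {z}) \<in> G i)"
  proof (intro allI impI ballI, rule ccontr)
    fix i A y assume i: "i \<le> s" and A: "A \<in> G i" "z \<in> A" "y \<in> V" "y \<notin> A"
      and nin: "insert y (A - {z}) \<notin> G i"
    have xe: "z \<noteq> y" using A by auto
    have shA: "sh z y A \<notin> G i" using A nin unfolding sh_def by simp
    let ?H = "\<lambda>j. Sh z y (G j)"
    have "?P ?H"
    proof (intro conjI allI impI)
      fix j assume j: "j \<le> s"
      show "?H j \<subseteq> ksubsets V k" using Sh_ksubsets[of "G j" V k y z] G assms(1) A(3) j by simp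
      show "card (?H j) = card (F j)" using Sh_card[OF fG[OF j] xe] G j by simp
    next
      show "cross_dependent s ?H" using Sh_cross[OF xe] G by simp
    qed
    then have "?m G \<le> ?m ?H" by (rule min)
    moreover have "?m ?H < ?m G"
    proof (rule sum_strict_mono_ex1)
      show "finite {..s}" by simp
      show "\<forall>j\<in>{..s}. card {B \<in> ?H j. z \<in> B} \<le> card {B \<in> G j. z \<in> B}"
        using Sh_measure_x_le[OF fG xe] by auto
      show "\<exists>j\<in>{..s}. card {B \<in> ?H j. z \<in> B} < card {B \<in> G j. z \<in> B}"
        using Sh_measure_x[OF fG[OF i] A(1) shA xe] i by auto
    qed
    ultimately show False by simp
  qed
  then show ?thesis using G by (intro exI[where x=G]) simp
qed





lemma shadow_ksub:
  assumes "finite V" "Y \<subseteq> ksubsets V k"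
  shows "shadow Y \<subseteq> ksubsets V (k - 1)"
proof
  fix B assume "B \<in> shadow Y"
  then obtain A y where A: "A \<in> Y" "y \<in> A" "B = A - {y}" unfolding shadow_def by blast
  have "A \<subseteq> V" "card A = k" using A(1) assms(2) unfolding ksubsets_def by auto
  moreover have "finite A" using \<open>A \<subseteq> V\<close> assms(1) finite_subset by auto
  ultimately show "B \<in> ksubsets V (k - 1)" using A unfolding ksubsets_def by auto
qed

lemma KK:
  "finite V \<Longrightarrow> X \<subseteq> ksubsets V k \<Longrightarrow> 1 \<le> k \<Longrightarrow> k \<le> m \<Longrightarrow> m choose k \<le> card X
   \<Longrightarrow> m choose (k - 1) \<le> card (shadow X)"
proof (induction "card V" arbitrary: V X k m rule: less_induct)
  case less
  have fX: "finite X" using less.prems(2) by (intro ksub_finite[OF less.prems(1), of X k])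
  have fsX: "finite (shadow X)" using less.prems(2) by (intro shadow_finite[OF less.prems(1), of X k])
  have "0 < m choose k" using less.prems(4) by simp
  then have "X \<noteq> {}" using less.prems(5) by auto
  then obtain A0 where A0: "A0 \<in> X" by auto
  have A0k: "A0 \<subseteq> V" "card A0 = k" using A0 less.prems(2) unfolding ksubsets_def by auto
  then have "A0 \<noteq> {}" using less.prems(3) by auto
  then obtain e where eA0: "e \<in> A0" by auto
  show ?case
  proof (cases "k = 1")
    case True
    have "{} \<in> shadow X"
    proof -
      have "finite A0" using A0k less.prems(1) finite_subset by auto
      then have "A0 = {e}" using A0k(2) True eA0 by (metis card_1_singletonE singletonD)
      then show ?thesis using A0 by (intro shadowI[of A0 X e]) auto
    qed
    then have "1 \<le> card (shadow X)" using fsX by (metis One_nat_def Suc_leI card_gt_0_iff empty_iff)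
    then show ?thesis using True by simp
  next
    case False
    then have k2: "2 \<le> k" using less.prems(3) by simp
    have eV: "e \<in> V" using eA0 A0k by auto
    obtain X' where X': "X' \<subseteq> ksubsets V k" "card X' = card X" "card (shadow X') \<le> card (shadow X)"
      and st: "\<And>A x. A \<in> X' \<Longrightarrow> x \<in> A \<Longrightarrow> e \<notin> A \<Longrightarrow> insert e (A - {x}) \<in> X'"
      using stab_e[OF less.prems(1) eV less.prems(2)] by blast
    have fX': "finite X'" using X'(1) by (intro ksub_finite[OF less.prems(1), of X' k])
    have fsX': "finite (shadow X')" using X'(1) by (intro shadow_finite[OF less.prems(1), of X' k])
    define X0 where "X0 = {A \<in> X'. e \<notin> A}"
    define X1 where "X1 = (\<lambda>A. A - {e}) ` {A \<in> X'. e \<in> A}"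
    let ?W = "V - {e}"
    have fW: "finite ?W" using less.prems(1) by simp
    have cW: "card ?W < card V" using less.prems(1) eV by (rule card_Diff1_less)
    have X0k: "X0 \<subseteq> ksubsets ?W k" using X'(1) unfolding X0_def ksubsets_def by auto
    have X1k: "X1 \<subseteq> ksubsets ?W (k - 1)"
    proof
      fix B assume "B \<in> X1"
      then obtain A where A: "A \<in> X'" "e \<in> A" "B = A - {e}" unfolding X1_def by auto
      have "A \<subseteq> V" "card A = k" using A(1) X'(1) unfolding ksubsets_def by auto
      moreover have "finite A" using \<open>A \<subseteq> V\<close> less.prems(1) finite_subset by auto
      ultimately show "B \<in> ksubsets ?W (k - 1)" using A unfolding ksubsets_def by auto
    qed
    have injX1: "inj_on (\<lambda>A. A - {e}) {A \<in> X'. e \<in> A}"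
    proof (rule inj_onI)
      fix A B assume "A \<in> {A \<in> X'. e \<in> A}" "B \<in> {A \<in> X'. e \<in> A}" "A - {e} = B - {e}"
      then show "A = B" by (metis (no_types, lifting) insert_Diff mem_Collect_eq)
    qed
    have cX': "card X' = card X0 + card X1"
    proof -
      have "card X1 = card {A \<in> X'. e \<in> A}" unfolding X1_def using injX1 by (rule card_image)
      moreover have "card X' = card X0 + card {A \<in> X'. e \<in> A}"
        unfolding X0_def using fX' by (subst card_Un_disjoint[symmetric]) (auto intro: arg_cong[where f=card])
      ultimately show ?thesis by simp
    qed
    have fX1: "finite X1" using X1k by (intro ksub_finite[OF fW, of X1 "k - 1"])
    have sX0: "shadow X0 \<subseteq> X1"
    proof
      fix G assume "G \<in> shadow X0"
      then obtain B y where B: "B \<in> X0" "y \<in> B" "G = B - {y}" unfolding shadow_def by blast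
      have "B \<in> X'" "e \<notin> B" using B(1) unfolding X0_def by auto
      then have "insert e (B - {y}) \<in> X'" using st B(2) by blast
      moreover have "insert e (B - {y}) - {e} = G" using B(3) \<open>e \<notin> B\<close> by auto
      ultimately show "G \<in> X1" unfolding X1_def by (intro image_eqI[of _ _ "insert e (B - {y})"]) auto
    qed
    obtain m' where m': "m = Suc m'" using less.prems(3,4) by (cases m) auto
    obtain k' where k': "k = Suc k'" using less.prems(3) by (cases k) auto
    have c1: "m' choose k' \<le> card X1"
    proof (rule ccontr)
      assume "\<not> m' choose k' \<le> card X1"
      then have lt: "card X1 < m' choose k'" by simp
      have "m choose k = (m' choose k') + (m' choose k)" using m' k' by simp
      then have gt: "m' choose k < card X0" using lt less.prems(5) X'(2) cX' by linarith
      show False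
      proof (cases "k \<le> m'")
        case True
        have "m' choose (k - 1) \<le> card (shadow X0)"
          using less.hyps[OF cW fW X0k less.prems(3) True] gt by simp
        also have "\<dots> \<le> card X1" using sX0 fX1 by (rule card_mono[rotated])
        finally show False using lt k' by simp
      next
        case False
        then have "m' = k'" using m' k' less.prems(4) by simp
        then have "X1 = {}" using lt fX1 by simp
        have "X0 \<noteq> {}" using gt by auto
        then obtain B where B: "B \<in> X0" by auto
        have "card B = k" using B X0k unfolding ksubsets_def by auto
        then have "B \<noteq> {}" using less.prems(3) by auto
        then obtain y where "y \<in> B" by auto
        then have "B - {y} \<in> shadow X0" using B by (intro shadowI[of B X0 y]) auto
        then show False using sX0 \<open>X1 = {}\<close> by auto
      qed
    qed
    have c2: "m' choose (k' - 1) \<le> card (shadow X1)"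
      using less.hyps[OF cW fW X1k] k2 k' m' less.prems(4) c1 by simp
    have fsX1: "finite (shadow X1)" using X1k by (intro shadow_finite[OF fW, of X1 "k - 1"])
    have sub1: "X1 \<subseteq> shadow X'"
    proof
      fix B assume "B \<in> X1"
      then obtain A where A: "A \<in> X'" "e \<in> A" "B = A - {e}" unfolding X1_def by auto
      then show "B \<in> shadow X'" by (intro shadowI[of A X' e])
    qed
    have sub2: "insert e ` shadow X1 \<subseteq> shadow X'"
    proof
      fix C assume "C \<in> insert e ` shadow X1"
      then obtain G where G: "G \<in> shadow X1" "C = insert e G" by auto
      then obtain B y where B: "B \<in> X1" "y \<in> B" "G = B - {y}" unfolding shadow_def by blast
      then obtain A where A: "A \<in> X'" "e \<in> A" "B = A - {e}" unfolding X1_def by auto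
      have "C = A - {y}" using A B G by auto
      moreover have "y \<in> A" using A B by auto
      ultimately show "C \<in> shadow X'" using A by (intro shadowI[of A X' y])
    qed
    have noe1: "e \<notin> B" if "B \<in> X1" for B using that unfolding X1_def by auto
    have noe2: "e \<notin> G" if "G \<in> shadow X1" for G
      using that noe1 unfolding shadow_def by auto
    have inj2: "inj_on (insert e) (shadow X1)"
    proof (rule inj_onI)
      fix A B assume "A \<in> shadow X1" "B \<in> shadow X1" "insert e A = insert e B"
      then show "A = B" using noe2 by (metis Diff_insert_absorb)
    qed
    have disj: "X1 \<inter> insert e ` shadow X1 = {}" using noe1 by auto
    have "card X1 + card (shadow X1) = card (X1 \<union> insert e ` shadow X1)"
      using card_Un_disjoint[OF fX1 finite_imageI[OF fsX1] disj] card_image[OF inj2] by simp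
    also have "\<dots> \<le> card (shadow X')" using sub1 sub2 fsX' by (intro card_mono) auto
    finally have "card X1 + card (shadow X1) \<le> card (shadow X')" .
    moreover have "m choose (k - 1) = (m' choose (k' - 1)) + (m' choose k')"
      using m' k' k2 by (cases k') auto
    ultimately show ?thesis using c1 c2 X'(3) by linarith
  qed
qed





lemma choose_mono_top: "a \<le> b \<Longrightarrow> a choose r \<le> b choose r"
proof -
  assume "a \<le> b"
  have step: "n choose r \<le> Suc n choose r" for n by (cases r) auto
  show ?thesis using lift_Suc_mono_le[of "\<lambda>n. n choose r", OF step \<open>a \<le> b\<close>] .
qed

lemma card_ksubsets: "finite X \<Longrightarrow> card (ksubsets X k) = card X choose k"
  unfolding ksubsets_def by (rule n_subsets)

theorem proposition1:
  fixes n s k :: nat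
  assumes "n > 0" "s > 0" "k > 0" "n \<ge> (s + 1) * k"
    and hyp: "\<And>G :: nat \<Rightarrow> nat set set.
              (\<forall>i\<le>s. G i \<subseteq> ksubsets {1..n} k) \<Longrightarrow> cross_dependent s G \<Longrightarrow>
              Min ((\<lambda>i. card (G i)) ` {0..s}) \<le> (n choose k) - ((n - s) choose k)"
  shows "\<And>F :: nat \<Rightarrow> nat set set.
           (\<forall>i\<le>s. F i \<subseteq> ksubsets {1..n+1} k) \<Longrightarrow> cross_dependent s F \<Longrightarrow>
           Min ((\<lambda>i. card (F i)) ` {0..s}) \<le> ((n + 1) choose k) - ((n + 1 - s) choose k)"
proof -
  fix F :: "nat \<Rightarrow> nat set set"
  assume Fk: "\<forall>i\<le>s. F i \<subseteq> ksubsets {1..n+1} k" and cd: "cross_dependent s F"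
  have finV: "finite {1..n+1}" by simp
  obtain G where Gk: "\<forall>i\<le>s. G i \<subseteq> ksubsets {1..n+1} k" and Gcd: "cross_dependent s G"
    and Gc: "\<forall>i\<le>s. card (G i) = card (F i)"
    and Gst: "\<forall>i\<le>s. \<forall>A\<in>G i. n+1 \<in> A \<longrightarrow> (\<forall>y\<in>{1..n+1}. y \<notin> A \<longrightarrow> insert y (A - {n+1}) \<in> G i)"
    using stab_main[OF finV Fk cd, of "n+1"] by blast
  define A where "A i = {B \<in> G i. n+1 \<notin> B}" for i
  have Ak: "\<forall>i\<le>s. A i \<subseteq> ksubsets {1..n} k"
  proof (intro allI impI subsetI)
    fix i B assume i: "i \<le> s" and B: "B \<in> A i"
    then have Bk: "B \<in> ksubsets {1..n+1} k" and nB: "n+1 \<notin> B" using Gk unfolding A_def by auto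
    have "B \<subseteq> {1..n}"
    proof
      fix x assume "x \<in> B"
      then have "x \<in> {1..n+1}" "x \<noteq> n+1" using Bk nB unfolding ksubsets_def by auto
      then show "x \<in> {1..n}" by auto
    qed
    then show "B \<in> ksubsets {1..n} k" using Bk unfolding ksubsets_def by simp
  qed
  have Acd: "cross_dependent s A" using Gcd by (rule cross_mono) (auto simp: A_def)
  have minA: "Min ((\<lambda>i. card (A i)) ` {0..s}) \<le> (n choose k) - ((n - s) choose k)"
    using hyp[OF Ak Acd] .
  have "Min ((\<lambda>i. card (A i)) ` {0..s}) \<in> (\<lambda>i. card (A i)) ` {0..s}"
    by (rule Min_in) auto
  then obtain i0 where i0': "Min ((\<lambda>i. card (A i)) ` {0..s}) = card (A i0)" "i0 \<in> {0..s}"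
    by (rule imageE)
  then have i0: "i0 \<le> s" "card (A i0) = Min ((\<lambda>i. card (A i)) ` {0..s})" by simp_all
  have cA: "card (A i0) \<le> (n choose k) - ((n - s) choose k)" using minA i0 by simp
  have Gi0: "G i0 \<subseteq> ksubsets {1..n+1} k" using Gk i0 by simp
  have fG: "finite (G i0)" using Gi0 by (intro ksub_finite[OF finV, of "G i0" k])
  define H where "H = (\<lambda>B. B - {n+1}) ` {B \<in> G i0. n+1 \<in> B}"
  have injH: "inj_on (\<lambda>B. B - {n+1}) {B \<in> G i0. n+1 \<in> B}"
  proof (rule inj_onI)
    fix X Y assume "X \<in> {B \<in> G i0. n+1 \<in> B}" "Y \<in> {B \<in> G i0. n+1 \<in> B}" "X - {n+1} = Y - {n+1}"
    then show "X = Y" by (metis (no_types, lifting) insert_Diff mem_Collect_eq)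
  qed
  have cG: "card (G i0) = card (A i0) + card H"
  proof -
    have "card H = card {B \<in> G i0. n+1 \<in> B}" unfolding H_def using injH by (rule card_image)
    moreover have "card (G i0) = card (A i0) + card {B \<in> G i0. n+1 \<in> B}"
      unfolding A_def using fG by (subst card_Un_disjoint[symmetric]) (auto intro: arg_cong[where f=card])
    ultimately show ?thesis by simp
  qed
  have Hk: "H \<subseteq> ksubsets {1..n} (k - 1)"
  proof
    fix C assume "C \<in> H"
    then obtain B where B: "B \<in> G i0" "n+1 \<in> B" "C = B - {n+1}" unfolding H_def by auto
    have "B \<subseteq> {1..n+1}" "card B = k" using B(1) Gi0 unfolding ksubsets_def by auto
    moreover have "finite B" using \<open>B \<subseteq> {1..n+1}\<close> finite_subset by auto
    moreover have "C \<subseteq> {1..n}" using B \<open>B \<subseteq> {1..n+1}\<close> by (auto simp: subset_iff)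
    ultimately show "C \<in> ksubsets {1..n} (k - 1)" using B unfolding ksubsets_def by auto
  qed
  define D where "D = ksubsets {1..n} k - A i0"
  have finW: "finite {1..n}" by simp
  have Dk: "D \<subseteq> ksubsets {1..n} k" unfolding D_def by auto
  have cK: "card (ksubsets {1..n} k) = n choose k" using card_ksubsets[OF finW] by simp
  have fK: "finite (ksubsets {1..n} k)" by (rule ksub_finite[OF finW, of _ k]) simp
  have cD: "card D = (n choose k) - card (A i0)"
  proof -
    have sub: "A i0 \<subseteq> ksubsets {1..n} k" using Ak i0(1) by simp
    show ?thesis unfolding D_def using card_Diff_subset[OF finite_subset[OF sub fK] sub] cK by simp
  qed
  have "s \<le> s * k" using assms(3) by simp
  moreover have "(s + 1) * k = s * k + k" by simp
  ultimately have kns: "k \<le> n - s" using assms(4) by linarith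
  have mono1: "(n - s) choose k \<le> n choose k" by (rule choose_mono_top) simp
  have mono2: "(n - s) choose (k - 1) \<le> n choose (k - 1)" by (rule choose_mono_top) simp
  have "(n - s) choose k \<le> card D" using cD cA mono1 by linarith
  then have sD: "(n - s) choose (k - 1) \<le> card (shadow D)"
    using KK[OF finW Dk _ kns] assms(3) by simp
  have sDk: "shadow D \<subseteq> ksubsets {1..n} (k - 1)" by (rule shadow_ksub[OF finW Dk])
  have disj: "H \<inter> shadow D = {}"
  proof (rule ccontr)
    assume "H \<inter> shadow D \<noteq> {}"
    then obtain C where C: "C \<in> H" "C \<in> shadow D" by auto
    then obtain B where B: "B \<in> G i0" "n+1 \<in> B" "C = B - {n+1}" unfolding H_def by auto
    obtain D0 y where D0: "D0 \<in> D" "y \<in> D0" "C = D0 - {y}" using C(2) unfolding shadow_def by auto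
    have D0sub: "D0 \<subseteq> {1..n}" using D0(1) Dk unfolding ksubsets_def by auto
    have yV: "y \<in> {1..n+1}" using D0sub D0(2) by auto
    have BD: "B - {n+1} = D0 - {y}" using B(3) D0(3) by simp
    have "y \<noteq> n+1" using D0sub D0(2) by auto
    then have yB: "y \<notin> B" using BD by blast
    have "\<forall>A\<in>G i0. n+1 \<in> A \<longrightarrow> (\<forall>y\<in>{1..n+1}. y \<notin> A \<longrightarrow> insert y (A - {n+1}) \<in> G i0)"
      using Gst i0(1) by simp
    then have "insert y (B - {n+1}) \<in> G i0" using B(1,2) yV yB by simp
    moreover have "insert y (B - {n+1}) = D0" unfolding BD using D0(2) by (simp add: insert_absorb)
    ultimately have "D0 \<in> A i0" using D0sub unfolding A_def by auto
    then show False using D0(1) unfolding D_def by auto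
  qed
  have fH: "finite H" using Hk by (intro ksub_finite[OF finW, of H "k - 1"])
  have fsD: "finite (shadow D)" using sDk by (intro ksub_finite[OF finW, of _ "k - 1"])
  have "card H + card (shadow D) = card (H \<union> shadow D)" using card_Un_disjoint[OF fH fsD disj] by simp
  also have "\<dots> \<le> card (ksubsets {1..n} (k - 1))"
    using Hk sDk by (intro card_mono ksub_finite[OF finW, of _ "k - 1"]) auto
  also have "\<dots> = n choose (k - 1)" using card_ksubsets[OF finW] by simp
  finally have cH: "card H \<le> (n choose (k - 1)) - ((n - s) choose (k - 1))" using sD by linarith
  obtain k' where k': "k = Suc k'" using assms(3) by (cases k) auto
  have e1: "(n + 1) choose k = (n choose (k - 1)) + (n choose k)" using k' by simp
  have "n + 1 - s = Suc (n - s)" using kns k' by simp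
  then have e2: "(n + 1 - s) choose k = ((n - s) choose (k - 1)) + ((n - s) choose k)" using k' by simp
  have "card (G i0) \<le> ((n + 1) choose k) - ((n + 1 - s) choose k)"
    using cG cA cH e1 e2 mono1 mono2 by linarith
  moreover have "Min ((\<lambda>i. card (F i)) ` {0..s}) \<le> card (F i0)"
    using i0(1) by (intro Min_le) auto
  moreover have "card (G i0) = card (F i0)" using Gc i0(1) by simp
  ultimately show "Min ((\<lambda>i. card (F i)) ` {0..s}) \<le> ((n + 1) choose k) - ((n + 1 - s) choose k)"
    by linarith
qed




end
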